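(* Let $n>3$ be an integer and let $L(n)$ be the graph defined in the context below. Then $-1$ and $n-2$ are eigenvalues of $L(n)$ (i.e., of its adjacency matrix).
   Context: Let $[n]=\{1,2,\dots,n\}$. Let $H(n)$ be the graph whose vertex set is $\{v : v\subseteq [n],\ |v|\in\{1,2\}\}$, where two vertices $v,w$ are adjacent if and only if $v\subset w$ or $w\subset v$ (equivalently, $H(n)$ is the subgraph of the hypercube $Q_n$ induced by the vertices of weight $1$ and $2$). Let $L(n)$ be the line graph of $H(n)$: its vertices are the edges $\{\{i\},\{i,j\}\}$ of $H(n)$ (with $i\neq j$ in $[n]$), denoted $[i,ij]$, and two such vertices are adjacent iff, as edges of $H(n)$, they share exactly one endpoint. The eigenvalues of a graph are the eigenvalues of its adjacency matrix. *)

theory Defs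
  imports Main "Jordan_Normal_Form.Char_Poly"
begin

definition H_vertices :: "nat \<Rightarrow> nat set set" where
  "H_vertices n = {v. v \<subseteq> {1..n} \<and> card v \<in> {1,2}}"

definition H_adj :: "nat set \<Rightarrow> nat set \<Rightarrow> bool" where
  "H_adj v w \<longleftrightarrow> v \<subset> w \<or> w \<subset> v"

text \<open>Edges of H(n), each edge being the 2-element set of its endpoints.
  These are the vertices of the line graph L(n).\<close>
definition H_edges :: "nat \<Rightarrow> nat set set set" where
  "H_edges n = {{v, w} | v w. v \<in> H_vertices n \<and> w \<in> H_vertices n \<and> H_adj v w}"

definition L_adj :: "nat set set \<Rightarrow> nat set set \<Rightarrow> bool" where
  "L_adj e f \<longleftrightarrow> card (e \<inter> f) = 1"

text \<open>A fixed (arbitrary) enumeration of the vertices of L(n); the spectrum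
  of the adjacency matrix does not depend on the chosen ordering.\<close>
definition L_vertex_list :: "nat \<Rightarrow> nat set set list" where
  "L_vertex_list n = (SOME xs. distinct xs \<and> set xs = H_edges n)"

definition L_adj_matrix :: "nat \<Rightarrow> real mat" where
  "L_adj_matrix n = (let xs = L_vertex_list n in
     mat (length xs) (length xs)
       (\<lambda>(a, b). if L_adj (xs ! a) (xs ! b) then 1 else 0))"

end

theory Submission
  imports Defs
begin

lemma sum_nth_distinct:
  assumes "distinct xs"
  shows "(\<Sum>b<length xs. h (xs ! b)) = (\<Sum>f\<in>set xs. h f)"
proof -
  have "bij_betw ((!) xs) {..<length xs} (set xs)"
    using assms by (simp add: bij_betw_def inj_on_nth set_conv_nth lessThan_def) (auto simp: set_conv_nth)
  then show ?thesis by (rule sum.reindex_bij_betw)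
qed

lemma eig_generic:
  fixes x :: "nat set set \<Rightarrow> real"
  assumes d: "distinct xs" and s: "set xs = V"
    and eq: "\<And>e. e\<in>V \<Longrightarrow> (\<Sum>f\<in>V. if L_adj e f then x f else 0) = k * x e"
    and e0: "e0 \<in> V" "x e0 \<noteq> 0"
  shows "eigenvalue (mat (length xs) (length xs) (\<lambda>(a, b). if L_adj (xs ! a) (xs ! b) then 1 else 0)) k"
proof -
  let ?A = "mat (length xs) (length xs) (\<lambda>(a, b). if L_adj (xs ! a) (xs ! b) then 1 else (0::real))"
  define v where "v = vec (length xs) (\<lambda>a. x (xs ! a))"
  have "?A *\<^sub>v v = k \<cdot>\<^sub>v v"
  proof (rule eq_vecI)
    fix a assume a: "a < dim_vec (k \<cdot>\<^sub>v v)"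
    hence a': "a < length xs" by (simp add: v_def)
    have "(?A *\<^sub>v v) $ a = (\<Sum>b<length xs. (if L_adj (xs ! a) (xs ! b) then 1 else 0) * x (xs ! b))"
      using a' by (simp add: v_def scalar_prod_def row_def atLeast0LessThan)
    also have "\<dots> = (\<Sum>f\<in>V. (if L_adj (xs ! a) f then 1 else 0) * x f)"
      using sum_nth_distinct[OF d, of "\<lambda>f. (if L_adj (xs ! a) f then 1 else 0) * x f"] s by simp
    also have "\<dots> = (\<Sum>f\<in>V. if L_adj (xs ! a) f then x f else 0)"
      by (rule sum.cong) auto
    also have "\<dots> = k * x (xs ! a)" using eq a' s by auto
    finally show "(?A *\<^sub>v v) $ a = (k \<cdot>\<^sub>v v) $ a" using a' by (simp add: v_def)
  qed (simp add: v_def)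
  moreover have "v \<noteq> 0\<^sub>v (length xs)"
  proof
    assume z: "v = 0\<^sub>v (length xs)"
    obtain i where i: "i < length xs" "xs ! i = e0" using e0 s by (metis in_set_conv_nth)
    have "v $ i = 0" using z i by simp
    thus False using i e0 by (simp add: v_def)
  qed
  ultimately show ?thesis unfolding eigenvalue_def eigenvector_def
    by (intro exI[of _ v]) (simp add: v_def)
qed
definition E :: "nat \<Rightarrow> nat \<Rightarrow> nat set set" where "E i j = {{i},{i,j}}"
definition P :: "nat \<Rightarrow> (nat \<times> nat) set" where "P n = {(i,j). i\<in>{1..n} \<and> j\<in>{1..n} \<and> i\<noteq>j}"

lemma H_edges_eq: "H_edges n = (\<lambda>(i,j). E i j) ` P n"
proof
  show "H_edges n \<subseteq> (\<lambda>(i,j). E i j) ` P n"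
  proof
    fix e assume "e \<in> H_edges n"
    then obtain v w where e: "e = {v,w}" and v: "v \<in> H_vertices n" and w: "w \<in> H_vertices n"
      and a: "v \<subset> w \<or> w \<subset> v" unfolding H_edges_def H_adj_def by blast
    have key: "\<And>v w. v \<in> H_vertices n \<Longrightarrow> w \<in> H_vertices n \<Longrightarrow> v \<subset> w \<Longrightarrow> {v,w} \<in> (\<lambda>(i,j). E i j) ` P n"
    proof -
      fix v w assume v: "v \<in> H_vertices n" and w: "w \<in> H_vertices n" and s: "v \<subset> w"
      have fw: "finite w" using w unfolding H_vertices_def by (auto intro: finite_subset)
      have "card v < card w" using psubset_card_mono[OF fw s] .
      hence cv: "card v = 1" and cw: "card w = 2" using v w unfolding H_vertices_def by auto
      obtain i where vi: "v = {i}" using cv card_1_singletonE by blast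
      obtain a b where ab: "w = {a,b}" "a \<noteq> b" using cw unfolding card_2_iff by blast
      have "i \<in> w" using s vi by auto
      then obtain j where wj: "w = {i,j}" "i \<noteq> j" using ab by auto
      have "i \<in> {1..n}" "j \<in> {1..n}" using w wj unfolding H_vertices_def by auto
      hence "(i,j) \<in> P n" using wj unfolding P_def by auto
      moreover have "{v,w} = E i j" using vi wj unfolding E_def by auto
      ultimately show "{v,w} \<in> (\<lambda>(i,j). E i j) ` P n" by force
    qed
    show "e \<in> (\<lambda>(i,j). E i j) ` P n"
      using a
    proof
      assume "v \<subset> w" thus ?thesis using key[OF v w] e by simp
    next
      assume "w \<subset> v"
      moreover have "e = {w,v}" by (simp add: e insert_commute)
      ultimately show ?thesis using key[OF w v] by simp
    qed
  qed
next
  show "(\<lambda>(i,j). E i j) ` P n \<subseteq> H_edges n"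
  proof
    fix e assume "e \<in> (\<lambda>(i,j). E i j) ` P n"
    then obtain i j where e: "e = E i j" and p: "(i,j) \<in> P n" by auto
    have "{i} \<in> H_vertices n" "{i,j} \<in> H_vertices n" "H_adj {i} {i,j}"
      using p unfolding H_vertices_def P_def H_adj_def by auto
    thus "e \<in> H_edges n" unfolding H_edges_def e E_def by blast
  qed
qed

lemma E_inj0: "i \<noteq> j \<Longrightarrow> k \<noteq> l \<Longrightarrow> {{i},{i,j}} = {{k::nat},{k,l}} \<Longrightarrow> i = k \<and> j = l"
proof -
  assume a: "i \<noteq> j" "k \<noteq> l" "{{i},{i,j}} = {{k::nat},{k,l}}"
  have "{i} \<in> {{k},{k,l}}" using a(3) by blast
  hence "{i} = {k} \<or> {i} = {k,l}" by blast
  moreover have "{i} \<noteq> {k,l}"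
  proof
    assume h: "{i} = {k,l}"
    have "k \<in> {i}" "l \<in> {i}" by (subst h, simp)+
    thus False using a(2) by simp
  qed
  ultimately have ik: "i = k" by blast
  have "{i,j} \<in> {{k},{k,l}}" using a(3) by blast
  hence "{i,j} = {k} \<or> {i,j} = {k,l}" by blast
  moreover have "{i,j} \<noteq> {k}"
  proof
    assume h: "{i,j} = {k}"
    have "i \<in> {k}" "j \<in> {k}" by (subst h[symmetric], simp)+
    thus False using a(1) by simp
  qed
  ultimately have "{i,j} = {i,l}" using ik by blast
  hence "j \<in> {i,l}" by (metis insertCI)
  hence "j = l" using a(1) by simp
  thus ?thesis using ik by simp
qed
lemma E_inj: "i \<noteq> j \<Longrightarrow> k \<noteq> l \<Longrightarrow> E i j = E k l \<Longrightarrow> i = k \<and> j = l"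
  unfolding E_def by (rule E_inj0)

lemma inj_E: "inj_on (\<lambda>(i,j). E i j) (P n)"
proof (rule inj_onI)
  fix p q assume "p \<in> P n" "q \<in> P n" "(\<lambda>(i,j). E i j) p = (\<lambda>(i,j). E i j) q"
  moreover obtain a b c d where "p = (a,b)" "q = (c,d)" by fastforce
  ultimately have "a \<noteq> b" "c \<noteq> d" "E a b = E c d" unfolding P_def by auto
  hence "a = c \<and> b = d" by (rule E_inj)
  thus "p = q" using \<open>p = (a,b)\<close> \<open>q = (c,d)\<close> by simp
qed

lemma adj_E:
  assumes "i \<noteq> j" "k \<noteq> l"
  shows "L_adj (E i j) (E k l) \<longleftrightarrow> (i = k \<and> j \<noteq> l) \<or> (i = l \<and> j = k)"
proof -
  consider "i = k \<and> j = l" | "i = k \<and> j \<noteq> l" | "i = l \<and> j = k" | "\<not>(i = k) \<and> \<not>(i = l \<and> j = k)" by blast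
  thus ?thesis
  proof cases
    case 1
    have "{i} \<noteq> {i,j}" using assms by auto
    hence "card (E i j \<inter> E k l) = 2" using 1 assms unfolding E_def by simp
    thus ?thesis using 1 assms unfolding L_adj_def by simp
  next
    case 2
    hence "E i j \<inter> E k l = {{i}}" using assms unfolding E_def by (auto simp: doubleton_eq_iff)
    thus ?thesis using 2 unfolding L_adj_def by simp
  next
    case 3
    hence "E i j \<inter> E k l = {{i,j}}" using assms unfolding E_def by (auto simp: doubleton_eq_iff)
    thus ?thesis using 3 unfolding L_adj_def by simp
  next
    case 4
    hence "E i j \<inter> E k l = {}" using assms unfolding E_def by (auto simp: doubleton_eq_iff)
    thus ?thesis using 4 unfolding L_adj_def by auto
  qed
qed

lemma sumP:
  fixes g :: "nat \<Rightarrow> nat \<Rightarrow> real"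
  assumes "(i,j) \<in> P n"
  shows "(\<Sum>p\<in>P n. if (i = fst p \<and> j \<noteq> snd p) \<or> (i = snd p \<and> j = fst p) then g (fst p) (snd p) else 0)
    = (\<Sum>l\<in>{1..n}-{i,j}. g i l) + g j i"
proof -
  let ?Q = "\<lambda>p. (i = fst p \<and> j \<noteq> snd p) \<or> (i = snd p \<and> j = fst p)"
  have fin: "finite (P n)" unfolding P_def by (rule finite_subset[of _ "{1..n}\<times>{1..n}"]) auto
  have "(\<Sum>p\<in>P n. if ?Q p then g (fst p) (snd p) else 0) = (\<Sum>p\<in>P n \<inter> {p. ?Q p}. g (fst p) (snd p))"
    by (subst sum.inter_restrict[OF fin]) simp
  also have "P n \<inter> {p. ?Q p} = insert (j,i) ((\<lambda>l. (i,l)) ` ({1..n}-{i,j}))"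
    using assms unfolding P_def by auto
  also have "(\<Sum>p\<in>insert (j,i) ((\<lambda>l. (i,l)) ` ({1..n}-{i,j})). g (fst p) (snd p))
      = g j i + (\<Sum>p\<in>(\<lambda>l. (i,l)) ` ({1..n}-{i,j}). g (fst p) (snd p))"
    using assms unfolding P_def by (subst sum.insert) auto
  also have "(\<Sum>p\<in>(\<lambda>l. (i,l)) ` ({1..n}-{i,j}). g (fst p) (snd p)) = (\<Sum>l\<in>{1..n}-{i,j}. g i l)"
    by (subst sum.reindex) (auto simp: inj_on_def)
  finally show ?thesis by simp
qed
definition f2 :: "nat \<Rightarrow> real" where "f2 i = (if i = 1 then 1 else 0) - (if i = 2 then 1 else 0)"
definition g2 :: "nat \<Rightarrow> nat \<Rightarrow> nat \<Rightarrow> real" where "g2 n i l = (real n - 1) * f2 i + f2 l"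

lemma f2_sum: assumes "n \<ge> 2" shows "(\<Sum>l\<in>{1..n}. f2 l) = 0"
  using assms unfolding f2_def by (simp add: sum_subtractf sum.delta')

lemma g2_eq:
  assumes "(i,j) \<in> P n" "n \<ge> 3"
  shows "(\<Sum>l\<in>{1..n}-{i,j}. g2 n i l) + g2 n j i = (real n - 2) * g2 n i j"
proof -
  have ij: "i \<in> {1..n}" "j \<in> {1..n}" "i \<noteq> j" using assms unfolding P_def by auto
  have sub: "{i,j} \<subseteq> {1..n}" using ij by auto
  have "card ({1..n}-{i,j}) = card {1..n} - card {i,j}" by (rule card_Diff_subset) (use sub in auto)
  hence c: "card ({1..n}-{i,j}) = n - 2" using ij by simp
  have s: "(\<Sum>l\<in>{1..n}-{i,j}. f2 l) = (\<Sum>l\<in>{1..n}. f2 l) - (\<Sum>l\<in>{i,j}. f2 l)"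
    using sub by (simp add: sum_diff)
  have "(\<Sum>l\<in>{1..n}-{i,j}. g2 n i l) = real (n-2) * ((real n - 1) * f2 i) + (\<Sum>l\<in>{1..n}-{i,j}. f2 l)"
    unfolding g2_def sum.distrib sum_constant c by (rule refl)
  also have "\<dots> = (real n - 2) * ((real n - 1) * f2 i) - f2 i - f2 j"
    using s f2_sum[of n] assms(2) ij(3) by (simp add: of_nat_diff)
  finally show ?thesis unfolding g2_def by (simp add: algebra_simps)
qed

lemma g2_nz: "n > 3 \<Longrightarrow> g2 n 1 2 \<noteq> 0" unfolding g2_def f2_def by simp

definition g1 :: "nat \<Rightarrow> nat \<Rightarrow> real" where "g1 i l = f2 l"

lemma g1_eq:
  assumes "(i,j) \<in> P n" "n \<ge> 3"
  shows "(\<Sum>l\<in>{1..n}-{i,j}. g1 i l) + g1 j i = -1 * g1 i j"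
proof -
  have ij: "i \<in> {1..n}" "j \<in> {1..n}" "i \<noteq> j" using assms unfolding P_def by auto
  have sub: "{i,j} \<subseteq> {1..n}" using ij by auto
  have s: "(\<Sum>l\<in>{1..n}-{i,j}. f2 l) = (\<Sum>l\<in>{1..n}. f2 l) - (\<Sum>l\<in>{i,j}. f2 l)"
    using sub by (simp add: sum_diff)
  thus ?thesis unfolding g1_def using f2_sum[of n] assms(2) ij(3) by simp
qed

lemma g1_nz: "g1 1 2 \<noteq> 0" unfolding g1_def f2_def by simp

lemma finite_P: "finite (P n)" unfolding P_def by (rule finite_subset[of _ "{1..n}\<times>{1..n}"]) auto

lemma eig_from_g:
  fixes g :: "nat \<Rightarrow> nat \<Rightarrow> real"
  assumes eq: "\<And>i j. (i,j) \<in> P n \<Longrightarrow> (\<Sum>l\<in>{1..n}-{i,j}. g i l) + g j i = k * g i j"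
    and p0: "(a,b) \<in> P n" "g a b \<noteq> 0"
  shows "eigenvalue (L_adj_matrix n) k"
proof -
  let ?F = "\<lambda>p. E (fst p) (snd p)"
  have Fe: "(\<lambda>(i,j). E i j) = ?F" by auto
  have HE: "H_edges n = ?F ` P n" using H_edges_eq Fe by simp
  have injF: "inj_on ?F (P n)" using inj_E Fe by metis
  have fin: "finite (H_edges n)" using HE finite_P by simp
  obtain ys where "distinct ys \<and> set ys = H_edges n" using finite_distinct_list[OF fin] by metis
  hence xs: "distinct (L_vertex_list n) \<and> set (L_vertex_list n) = H_edges n"
    unfolding L_vertex_list_def by (rule someI)
  define pr where "pr e = (SOME p. p \<in> P n \<and> ?F p = e)" for e
  have prF: "pr (?F p) = p" if "p \<in> P n" for p
  proof -
    have "pr (?F p) \<in> P n \<and> ?F (pr (?F p)) = ?F p"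
      unfolding pr_def by (rule someI[of _ p]) (use that in simp)
    thus ?thesis using injF that by (meson inj_onD)
  qed
  define x where "x e = g (fst (pr e)) (snd (pr e))" for e
  have xF: "x (?F p) = g (fst p) (snd p)" if "p \<in> P n" for p
    unfolding x_def using prF[OF that] by simp
  show ?thesis unfolding L_adj_matrix_def Let_def
  proof (rule eig_generic[of "L_vertex_list n" "H_edges n" x k "E a b"])
    show "distinct (L_vertex_list n)" "set (L_vertex_list n) = H_edges n" using xs by auto
    show "E a b \<in> H_edges n" unfolding HE by (rule image_eqI[of _ _ "(a,b)"]) (simp_all add: p0)
    show "x (E a b) \<noteq> 0" using xF[OF p0(1)] p0 by simp
    fix e assume "e \<in> H_edges n"
    then obtain q where q: "q \<in> P n" "e = ?F q" unfolding HE by (rule imageE) simp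
    obtain i j where qij: "q = (i,j)" by fastforce
    have ijP: "(i,j) \<in> P n" using q qij by simp
    have ij: "i \<noteq> j" using ijP unfolding P_def by simp
    have "(\<Sum>f\<in>H_edges n. if L_adj e f then x f else 0)
        = (\<Sum>p\<in>P n. if L_adj e (?F p) then x (?F p) else 0)"
      unfolding HE by (rule sum.reindex[OF injF, unfolded comp_def])
    also have "\<dots> = (\<Sum>p\<in>P n. if (i = fst p \<and> j \<noteq> snd p) \<or> (i = snd p \<and> j = fst p) then g (fst p) (snd p) else 0)"
    proof (rule sum.cong[OF refl])
      fix p assume p: "p \<in> P n"
      have "fst p \<noteq> snd p" using p unfolding P_def by auto
      hence "L_adj e (?F p) \<longleftrightarrow> (i = fst p \<and> j \<noteq> snd p) \<or> (i = snd p \<and> j = fst p)"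
        using adj_E[OF ij] q qij by simp
      thus "(if L_adj e (?F p) then x (?F p) else 0) = (if (i = fst p \<and> j \<noteq> snd p) \<or> (i = snd p \<and> j = fst p) then g (fst p) (snd p) else 0)"
        using xF[OF p] by simp
    qed
    also have "\<dots> = (\<Sum>l\<in>{1..n}-{i,j}. g i l) + g j i" by (rule sumP[OF ijP])
    also have "\<dots> = k * g i j" by (rule eq[OF ijP])
    also have "\<dots> = k * x e" using xF[OF q(1)] q qij by simp
    finally show "(\<Sum>f\<in>H_edges n. if L_adj e f then x f else 0) = k * x e" .
  qed
qed

theorem proposition3p3:
  fixes n :: nat
  assumes "n > 3"
  shows "eigenvalue (L_adj_matrix n) (-1) \<and> eigenvalue (L_adj_matrix n) (real n - 2)"
proof
  have p0: "(1,2) \<in> P n" using assms unfolding P_def by auto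
  show "eigenvalue (L_adj_matrix n) (-1)"
    by (rule eig_from_g[where g = g1, OF _ p0 g1_nz]) (use g1_eq assms in simp)
  show "eigenvalue (L_adj_matrix n) (real n - 2)"
    by (rule eig_from_g[where g = "g2 n", OF _ p0 g2_nz[OF assms]]) (use g2_eq assms in simp)
qed

end
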